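(* In the session calculus, strong fairness of actions (SA) is weaker than strong fairness of components (SC): every SC-fair path is SA-fair. Likewise, weak fairness of actions (WA) is weaker than weak fairness of components (WC): every WC-fair path is WA-fair.
   Context: Session calculus: threads $P ::= \mathbf{end} \mid \bigoplus_{i\in I} p_i!\lambda_i;P_i \mid \sum_{i\in I} p_i?\lambda_i;P_i \mid X \mid \mu X.P$ (guarded recursion), thread states additionally $\langle q!\lambda\rangle;P$; networks $p[\![P]\!]\mid 0\mid N\parallel N$ with distinct locations and closed threads, modulo associativity/commutativity/unit. Transitions: (choice) $p[\![\bigoplus_{i\in I}p_i!\lambda_i;P_i]\!]\parallel N \xrightarrow{\tau} p[\![\langle p_k!\lambda_k\rangle;P_k]\!]\parallel N$; (unfold) $p[\![\mu X.P]\!]\parallel N\xrightarrow{\tau} p[\![P\{\mu X.P/X\}]\!]\parallel N$; (comm) $p_k[\![\langle q!\lambda_k\rangle;Q]\!]\parallel q[\![\sum_{i\in I}p_i?\lambda_i;P_i]\!]\parallel N \xrightarrow{(p_k,\lambda_k,q)} p_k[\![Q]\!]\parallel q[\![P_k]\!]\parallel N$. $\mathrm{comp}(t)$ is the moving location for a $\tau$-transition and $\{p,q\}$ for label $(p,\lambda,q)$. A path is a network state with a maximal sequence of transitions. For a notion of task: relentlessly enabled on a path = enabled in some state of every suffix; perpetually enabled = enabled in every state; a path $\pi$ is strongly (weakly) fair if for every suffix $\pi'$ each task relentlessly (perpetually) enabled on $\pi'$ is engaged in by $\pi'$. Components (SC/WC): tasks are locations $p$; enabled in $N$ if some transition $t$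 from $N$ has $p\in\mathrm{comp}(t)$; engaged in if the path contains such $t$. Actions (SA/WA): tasks are transition labels $\alpha$ (either $\tau$ or $(p,\lambda,q)$); enabled in $N$ if some transition labelled $\alpha$ leaves $N$; engaged in if the path contains a transition labelled $\alpha$. *)

theory Defs
  imports Main "HOL-Library.Extended_Nat"
begin

text \<open>Thread states. Sel = internal choice (p_i!l_i;P_i), Bra = external choice
  (p_i?l_i;P_i), Out q l P = the committed state <q!l>;P.  Index sets are lists.\<close>
datatype ('loc, 'lab, 'var) thread =
    End
  | Sel "('loc \<times> 'lab \<times> ('loc, 'lab, 'var) thread) list"
  | Bra "('loc \<times> 'lab \<times> ('loc, 'lab, 'var) thread) list"
  | Var 'var
  | Mu 'var "('loc, 'lab, 'var) thread"
  | Out 'loc 'lab "('loc, 'lab, 'var) thread"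

fun subst :: "'var \<Rightarrow> ('loc, 'lab, 'var) thread \<Rightarrow> ('loc, 'lab, 'var) thread \<Rightarrow> ('loc, 'lab, 'var) thread" where
  "subst X Q End = End"
| "subst X Q (Sel bs) = Sel (map (\<lambda>(p, l, P). (p, l, subst X Q P)) bs)"
| "subst X Q (Bra bs) = Bra (map (\<lambda>(p, l, P). (p, l, subst X Q P)) bs)"
| "subst X Q (Var Y) = (if X = Y then Q else Var Y)"
| "subst X Q (Mu Y P) = (if X = Y then Mu Y P else Mu Y (subst X Q P))"
| "subst X Q (Out p l P) = Out p l (subst X Q P)"

fun fv :: "('loc, 'lab, 'var) thread \<Rightarrow> 'var set" where
  "fv End = {}"
| "fv (Sel bs) = (\<Union>(p, l, P)\<in>set bs. fv P)"
| "fv (Bra bs) = (\<Union>(p, l, P)\<in>set bs. fv P)"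
| "fv (Var Y) = {Y}"
| "fv (Mu Y P) = fv P - {Y}"
| "fv (Out p l P) = fv P"

fun ug :: "('loc, 'lab, 'var) thread \<Rightarrow> 'var set" where
  "ug End = {}"
| "ug (Sel bs) = {}"
| "ug (Bra bs) = {}"
| "ug (Var Y) = {Y}"
| "ug (Mu Y P) = ug P - {Y}"
| "ug (Out p l P) = {}"

fun guarded :: "('loc, 'lab, 'var) thread \<Rightarrow> bool" where
  "guarded End = True"
| "guarded (Sel bs) = (\<forall>(p, l, P)\<in>set bs. guarded P)"
| "guarded (Bra bs) = (\<forall>(p, l, P)\<in>set bs. guarded P)"
| "guarded (Var Y) = True"
| "guarded (Mu Y P) = (Y \<notin> ug P \<and> guarded P)"
| "guarded (Out p l P) = guarded P"

fun pure :: "('loc, 'lab, 'var) thread \<Rightarrow> bool" where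
  "pure End = True"
| "pure (Sel bs) = (\<forall>(p, l, P)\<in>set bs. pure P)"
| "pure (Bra bs) = (\<forall>(p, l, P)\<in>set bs. pure P)"
| "pure (Var Y) = True"
| "pure (Mu Y P) = pure P"
| "pure (Out p l P) = False"

definition wf_state :: "('loc, 'lab, 'var) thread \<Rightarrow> bool" where
  "wf_state P \<longleftrightarrow> fv P = {} \<and> guarded P \<and>
     (pure P \<or> (\<exists>q l Q. P = Out q l Q \<and> pure Q))"

text \<open>Networks: finite maps from (distinct) locations to thread states; this
  representation builds in associativity/commutativity/unit.\<close>
type_synonym ('loc, 'lab, 'var) net = "'loc \<Rightarrow> ('loc, 'lab, 'var) thread option"

definition wf_net :: "('loc, 'lab, 'var) net \<Rightarrow> bool" where
  "wf_net N \<longleftrightarrow> finite (dom N) \<and> (\<forall>p P. N p = Some P \<longrightarrow> wf_state P)"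

datatype ('loc, 'lab) trans = TauAt 'loc | ComT 'loc 'lab 'loc

datatype ('loc, 'lab) label = Tau | Lab 'loc 'lab 'loc

fun lbl :: "('loc, 'lab) trans \<Rightarrow> ('loc, 'lab) label" where
  "lbl (TauAt p) = Tau"
| "lbl (ComT p l q) = Lab p l q"

fun comp :: "('loc, 'lab) trans \<Rightarrow> 'loc set" where
  "comp (TauAt p) = {p}"
| "comp (ComT p l q) = {p, q}"

inductive step :: "('loc, 'lab, 'var) net \<Rightarrow> ('loc, 'lab) trans \<Rightarrow> ('loc, 'lab, 'var) net \<Rightarrow> bool" where
  choice: "\<lbrakk> N p = Some (Sel bs); k < length bs; bs ! k = (q, l, P) \<rbrakk>
           \<Longrightarrow> step N (TauAt p) (N(p \<mapsto> Out q l P))"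
| unfold: "N p = Some (Mu X P) \<Longrightarrow> step N (TauAt p) (N(p \<mapsto> subst X (Mu X P) P))"
| comm: "\<lbrakk> N p = Some (Out q l Q); N q = Some (Bra bs); k < length bs; bs ! k = (p, l, P) \<rbrakk>
         \<Longrightarrow> step N (ComT p l q) (N(p \<mapsto> Q, q \<mapsto> P))"

text \<open>A path: states s 0, s 1, ..., transitions t 0, t 1, ..., of length len
  (number of transitions, possibly infinite); maximal: if finite, the last state
  has no outgoing transition.\<close>
definition is_path :: "(nat \<Rightarrow> ('loc, 'lab, 'var) net) \<Rightarrow> (nat \<Rightarrow> ('loc, 'lab) trans) \<Rightarrow> enat \<Rightarrow> bool" where
  "is_path s t len \<longleftrightarrow>
     (\<forall>i. enat i < len \<longrightarrow> step (s i) (t i) (s (Suc i))) \<and>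
     (\<forall>n. len = enat n \<longrightarrow> (\<nexists>u N'. step (s n) u N'))"

text \<open>Generic fairness, parametrised by a notion of task: en x N (task x enabled
  in state N) and eng x u (transition u engages in task x).  The suffix starting
  at position i consists of states s j with i \<le> j \<le> len and transitions t j
  with i \<le> j < len.\<close>
definition relentless where
  "relentless en s len i x \<longleftrightarrow>
     (\<forall>j. i \<le> j \<longrightarrow> enat j \<le> len \<longrightarrow> (\<exists>k. j \<le> k \<and> enat k \<le> len \<and> en x (s k)))"

definition perpetual where
  "perpetual en s len i x \<longleftrightarrow> (\<forall>k. i \<le> k \<longrightarrow> enat k \<le> len \<longrightarrow> en x (s k))"

definition engaged where
  "engaged eng t len i x \<longleftrightarrow> (\<exists>k. i \<le> k \<and> enat k < len \<and> eng x (t k))"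

definition strongly_fair where
  "strongly_fair en eng s t len \<longleftrightarrow>
     (\<forall>i x. enat i \<le> len \<longrightarrow> relentless en s len i x \<longrightarrow> engaged eng t len i x)"

definition weakly_fair where
  "weakly_fair en eng s t len \<longleftrightarrow>
     (\<forall>i x. enat i \<le> len \<longrightarrow> perpetual en s len i x \<longrightarrow> engaged eng t len i x)"

definition en_comp :: "'loc \<Rightarrow> ('loc, 'lab, 'var) net \<Rightarrow> bool" where
  "en_comp p N \<longleftrightarrow> (\<exists>u N'. step N u N' \<and> p \<in> comp u)"

definition eng_comp :: "'loc \<Rightarrow> ('loc, 'lab) trans \<Rightarrow> bool" where
  "eng_comp p u \<longleftrightarrow> p \<in> comp u"

definition en_act :: "('loc, 'lab) label \<Rightarrow> ('loc, 'lab, 'var) net \<Rightarrow> bool" where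
  "en_act a N \<longleftrightarrow> (\<exists>u N'. step N u N' \<and> lbl u = a)"

definition eng_act :: "('loc, 'lab) label \<Rightarrow> ('loc, 'lab) trans \<Rightarrow> bool" where
  "eng_act a u \<longleftrightarrow> lbl u = a"

definition SC_fair :: "(nat \<Rightarrow> ('loc, 'lab, 'var) net) \<Rightarrow> (nat \<Rightarrow> ('loc, 'lab) trans) \<Rightarrow> enat \<Rightarrow> bool" where
  "SC_fair = strongly_fair en_comp eng_comp"
definition WC_fair :: "(nat \<Rightarrow> ('loc, 'lab, 'var) net) \<Rightarrow> (nat \<Rightarrow> ('loc, 'lab) trans) \<Rightarrow> enat \<Rightarrow> bool" where
  "WC_fair = weakly_fair en_comp eng_comp"
definition SA_fair :: "(nat \<Rightarrow> ('loc, 'lab, 'var) net) \<Rightarrow> (nat \<Rightarrow> ('loc, 'lab) trans) \<Rightarrow> enat \<Rightarrow> bool" where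
  "SA_fair = strongly_fair en_act eng_act"
definition WA_fair :: "(nat \<Rightarrow> ('loc, 'lab, 'var) net) \<Rightarrow> (nat \<Rightarrow> ('loc, 'lab) trans) \<Rightarrow> enat \<Rightarrow> bool" where
  "WA_fair = weakly_fair en_act eng_act"

end

theory Submission
  imports Defs
begin

lemma frame_step: "step N u N' \<Longrightarrow> p \<notin> comp u \<Longrightarrow> N' p = N p"
  by (induction rule: step.induct) auto

lemma frame_path:
  assumes "is_path s t len" "\<forall>m. k \<le> m \<and> m < n \<longrightarrow> p \<notin> comp (t m)" "enat n \<le> len" "k \<le> n"
  shows "s n p = s k p"
  using assms(2-4)
proof (induction n)
  case 0 then show ?case by simp
next
  case (Suc n)
  show ?case
  proof (cases "k = Suc n")
    case False
    then have kn: "k \<le> n" using Suc.prems by simp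
    have lt: "enat n < len" using Suc_ile_eq[THEN iffD1, OF Suc.prems(2)] .
    have st: "step (s n) (t n) (s (Suc n))" using assms(1) lt unfolding is_path_def by blast
    have "p \<notin> comp (t n)" using Suc.prems(1) kn by simp
    then have "s (Suc n) p = s n p" by (rule frame_step[OF st])
    moreover have "s n p = s k p" using Suc.IH Suc.prems kn lt by (simp add: order_less_imp_le)
    ultimately show ?thesis by simp
  qed simp
qed

lemma first_move:
  assumes "is_path s t len" "engaged eng_comp t len k p"
  shows "\<exists>m\<ge>k. enat m < len \<and> p \<in> comp (t m) \<and> s m p = s k p \<and> step (s m) (t m) (s (Suc m))"
proof -
  let ?P = "\<lambda>m. k \<le> m \<and> enat m < len \<and> p \<in> comp (t m)"
  have ex: "\<exists>m. ?P m" using assms(2) unfolding engaged_def eng_comp_def by blast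
  define m where "m = (LEAST m. ?P m)"
  have Pm: "?P m" using LeastI_ex[OF ex] m_def by simp
  have "\<forall>m'. k \<le> m' \<and> m' < m \<longrightarrow> p \<notin> comp (t m')"
  proof (intro allI impI)
    fix m' assume h: "k \<le> m' \<and> m' < m"
    show "p \<notin> comp (t m')"
    proof
      assume "p \<in> comp (t m')"
      moreover have "enat m' < len"
      proof -
        have "enat m' < enat m" using h by simp
        then show ?thesis using Pm order_less_trans by blast
      qed
      ultimately have "?P m'" using h by simp
      then have "m \<le> m'" unfolding m_def by (rule Least_le)
      then show False using h by simp
    qed
  qed
  then have "s m p = s k p" using frame_path[OF assms(1)] Pm by (simp add: order_less_imp_le)
  moreover have "step (s m) (t m) (s (Suc m))" using assms(1) Pm unfolding is_path_def by blast
  ultimately show ?thesis using Pm by blast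
qed

lemma out_step: "step N u N' \<Longrightarrow> p \<in> comp u \<Longrightarrow> N p = Some (Out q l Q) \<Longrightarrow> u = ComT p l q"
  by (induction rule: step.induct) auto

lemma tau_step: "step N u N' \<Longrightarrow> p \<in> comp u \<Longrightarrow> (\<exists>bs. N p = Some (Sel bs)) \<or> (\<exists>X P. N p = Some (Mu X P)) \<Longrightarrow> u = TauAt p"
  by (induction rule: step.induct) auto

lemma tau_shape: "step N u N' \<Longrightarrow> u = TauAt p \<Longrightarrow> (\<exists>bs. N p = Some (Sel bs)) \<or> (\<exists>X P. N p = Some (Mu X P))"
  by (induction rule: step.induct) auto

lemma tau_transfer: "step N u N' \<Longrightarrow> u = TauAt p \<Longrightarrow> M p = N p \<Longrightarrow> \<exists>M'. step M (TauAt p) M'"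
proof (induction rule: step.induct)
  case (choice N p bs k q l P)
  then show ?case using step.choice[of M p bs k q l P] by auto
next
  case (unfold N p X P)
  then show ?case using step.unfold[of M p X P] by auto
next
  case comm then show ?case by simp
qed

lemma lab_shape: "step N u N' \<Longrightarrow> lbl u = Lab p l q \<Longrightarrow> (\<exists>Q. N p = Some (Out q l Q)) \<and> p \<in> comp u"
  by (induction rule: step.induct) auto

lemma lab_en: "en_act (Lab p l q) N \<Longrightarrow> (\<exists>Q. N p = Some (Out q l Q)) \<and> en_comp p N"
proof -
  assume "en_act (Lab p l q) N"
  then obtain u N' where u: "step N u N'" "lbl u = Lab p l q" unfolding en_act_def by blast
  from lab_shape[OF u] show ?thesis unfolding en_comp_def using u(1) by blast
qed

lemma lab_engage:
  assumes "is_path s t len" "en_act (Lab p l q) (s k)" "engaged eng_comp t len k p"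
  shows "engaged eng_act t len k (Lab p l q)"
proof -
  obtain Q where Q: "s k p = Some (Out q l Q)" using lab_en[OF assms(2)] by blast
  obtain m where m: "m \<ge> k" "enat m < len" "p \<in> comp (t m)" "s m p = s k p" "step (s m) (t m) (s (Suc m))"
    using first_move[OF assms(1,3)] by blast
  have "t m = ComT p l q" using out_step[OF m(5) m(3)] m(4) Q by simp
  then show ?thesis unfolding engaged_def eng_act_def using m by auto
qed

lemma tau_engage:
  assumes "is_path s t len" "en_act Tau (s k)"
  shows "engaged eng_act t len k Tau \<or> (\<exists>p. perpetual en_comp s len k p \<and> \<not> engaged eng_comp t len k p)"
proof -
  obtain u N' where u: "step (s k) u N'" "lbl u = Tau" using assms(2) unfolding en_act_def by blast
  then obtain p where p: "u = TauAt p" by (cases u) auto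
  show ?thesis
  proof (cases "engaged eng_comp t len k p")
    case True
    obtain m where m: "m \<ge> k" "enat m < len" "p \<in> comp (t m)" "s m p = s k p" "step (s m) (t m) (s (Suc m))"
      using first_move[OF assms(1) True] by blast
    have "t m = TauAt p" using tau_step[OF m(5) m(3)] tau_shape[OF u(1) p] m(4) by simp
    then show ?thesis unfolding engaged_def eng_act_def using m by auto
  next
    case False
    have "perpetual en_comp s len k p"
      unfolding perpetual_def
    proof (intro allI impI)
      fix m assume h: "k \<le> m" "enat m \<le> len"
      have "\<forall>m'. k \<le> m' \<and> m' < m \<longrightarrow> p \<notin> comp (t m')"
      proof (intro allI impI)
        fix m' assume "k \<le> m' \<and> m' < m"
        then have "enat m' < enat m" by simp
        then have "enat m' < len" using h(2) less_le_trans by blast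
        then show "p \<notin> comp (t m')" using False \<open>k \<le> m' \<and> m' < m\<close>
          unfolding engaged_def eng_comp_def by blast
      qed
      then have "s m p = s k p" using frame_path[OF assms(1)] h by blast
      then obtain M' where M': "step (s m) (TauAt p) M'" using tau_transfer[OF u(1) p] by blast
      have "p \<in> comp (TauAt p)" by simp
      then show "en_comp p (s m)" unfolding en_comp_def using M' by blast
    qed
    then show ?thesis using False by blast
  qed
qed

lemma perp_rel: "perpetual en s len k x \<Longrightarrow> relentless en s len k x"
  unfolding perpetual_def relentless_def
proof (intro allI impI)
  fix j assume p: "\<forall>k'. k \<le> k' \<longrightarrow> enat k' \<le> len \<longrightarrow> en x (s k')"
    and j: "k \<le> j" "enat j \<le> len"
  have "en x (s j)" using p j by simp
  then show "\<exists>k'. j \<le> k' \<and> enat k' \<le> len \<and> en x (s k')" using j(2) by auto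
qed

lemma eng_mono: "engaged eng t len k x \<Longrightarrow> i \<le> k \<Longrightarrow> engaged eng t len i x"
  unfolding engaged_def
proof -
  assume "\<exists>k'\<ge>k. enat k' < len \<and> eng x (t k')" "i \<le> k"
  then obtain k' where "k \<le> k'" "enat k' < len" "eng x (t k')" by blast
  then show "\<exists>k'\<ge>i. enat k' < len \<and> eng x (t k')" using \<open>i \<le> k\<close> by (intro exI[of _ k']) simp
qed

lemma rel_comp_of_lab: "relentless en_act s len k (Lab p l q) \<Longrightarrow> relentless en_comp s len k p"
  unfolding relentless_def
proof (intro allI impI)
  fix j assume r: "\<forall>j. k \<le> j \<longrightarrow> enat j \<le> len \<longrightarrow> (\<exists>k'. j \<le> k' \<and> enat k' \<le> len \<and> en_act (Lab p l q) (s k'))"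
    and j: "k \<le> j" "enat j \<le> len"
  obtain k' where k': "j \<le> k'" "enat k' \<le> len" "en_act (Lab p l q) (s k')" using r j by blast
  have "en_comp p (s k')" using lab_en[OF k'(3)] by simp
  then show "\<exists>k'. j \<le> k' \<and> enat k' \<le> len \<and> en_comp p (s k')" using k' by (intro exI[of _ k']) simp
qed

lemma perp_comp_of_lab: "perpetual en_act s len k (Lab p l q) \<Longrightarrow> perpetual en_comp s len k p"
  unfolding perpetual_def
proof (intro allI impI)
  fix j assume r: "\<forall>k'. k \<le> k' \<longrightarrow> enat k' \<le> len \<longrightarrow> en_act (Lab p l q) (s k')"
    and j: "k \<le> j" "enat j \<le> len"
  have "en_act (Lab p l q) (s j)" using r j by simp
  then show "en_comp p (s j)" by (rule conjunct2[OF lab_en])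
qed

theorem mainTheorem14:
  fixes s :: "nat \<Rightarrow> ('loc, 'lab, 'var) net"
    and t :: "nat \<Rightarrow> ('loc, 'lab) trans"
    and len :: enat
  assumes "wf_net (s 0)"
    and "is_path s t len"
  shows "(SC_fair s t len \<longrightarrow> SA_fair s t len) \<and> (WC_fair s t len \<longrightarrow> WA_fair s t len)"
proof (intro conjI impI)
  assume SC: "SC_fair s t len"
  have SC': "\<And>i x. enat i \<le> len \<Longrightarrow> relentless en_comp s len i x \<Longrightarrow> engaged eng_comp t len i x"
    using SC unfolding SC_fair_def strongly_fair_def by blast
  show "SA_fair s t len"
    unfolding SA_fair_def strongly_fair_def
  proof (intro allI impI)
    fix i a assume i: "enat i \<le> len" and r: "relentless en_act s len i a"
    obtain k where k: "i \<le> k" "enat k \<le> len" "en_act a (s k)"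
      using r i unfolding relentless_def by blast
    have rk: "relentless en_act s len k a" using r k(1) unfolding relentless_def by auto
    show "engaged eng_act t len i a"
    proof (cases a)
      case Tau
      have en: "en_act Tau (s k)" using k(3) Tau by simp
      have h: "engaged eng_act t len k Tau"
      proof (rule disjE[OF tau_engage[OF assms(2) en]])
        assume "\<exists>p. perpetual en_comp s len k p \<and> \<not> engaged eng_comp t len k p"
        then obtain p where p: "perpetual en_comp s len k p" "\<not> engaged eng_comp t len k p" by blast
        have "engaged eng_comp t len k p" using SC'[OF k(2) perp_rel[OF p(1)]] .
        then show ?thesis using p(2) by simp
      qed
      show ?thesis using eng_mono[OF h k(1)] Tau by simp
    next
      case (Lab p l q)
      have "relentless en_comp s len k p" using rel_comp_of_lab rk Lab by simp
      then have "engaged eng_comp t len k p" using SC'[OF k(2)] by simp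
      then have "engaged eng_act t len k a" using lab_engage[OF assms(2)] k(3) Lab by simp
      then show ?thesis by (rule eng_mono[OF _ k(1)])
    qed
  qed
next
  assume WC: "WC_fair s t len"
  have WC': "\<And>i x. enat i \<le> len \<Longrightarrow> perpetual en_comp s len i x \<Longrightarrow> engaged eng_comp t len i x"
    using WC unfolding WC_fair_def weakly_fair_def by blast
  show "WA_fair s t len"
    unfolding WA_fair_def weakly_fair_def
  proof (intro allI impI)
    fix i a assume i: "enat i \<le> len" and r: "perpetual en_act s len i a"
    have ei: "en_act a (s i)" using r i unfolding perpetual_def by blast
    show "engaged eng_act t len i a"
    proof (cases a)
      case Tau
      have en: "en_act Tau (s i)" using ei Tau by simp
      have "engaged eng_act t len i Tau"
      proof (rule disjE[OF tau_engage[OF assms(2) en]])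
        assume "\<exists>p. perpetual en_comp s len i p \<and> \<not> engaged eng_comp t len i p"
        then obtain p where p: "perpetual en_comp s len i p" "\<not> engaged eng_comp t len i p" by blast
        have "engaged eng_comp t len i p" using WC'[OF i p(1)] .
        then show ?thesis using p(2) by simp
      qed
      then show ?thesis using Tau by simp
    next
      case (Lab p l q)
      have "perpetual en_comp s len i p" using perp_comp_of_lab r Lab by simp
      then have "engaged eng_comp t len i p" using WC'[OF i] by simp
      then show ?thesis using lab_engage[OF assms(2)] ei Lab by simp
    qed
  qed
qed

end
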